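(* Consider a one-parameter family of admissible vector fields of a feedforward network, with internal phase space $V$. If $V=\mathbb R$, then no linear admissible map (in particular no linearization at a fully synchronous equilibrium) has a pair of non-real complex conjugate eigenvalues; hence in a one-parameter bifurcation only real eigenvalues can cross the imaginary axis. On the other hand, if $\dim V\ge 2$, there are linear admissible maps with non-real complex conjugate eigenvalues, so that a one-parameter bifurcation in which a pair of complex conjugate eigenvalues crosses the imaginary axis is possible.
   Context: A homogeneous coupled cell network with asymmetric inputs consists of a finite set of cells $C$ and a set $\Sigma=\{\sigma_1,\dots,\sigma_n\}$ of pairwise distinct maps $\sigma\colon C\to C$ with $\sigma_1=\mathrm{Id}_C$; there is an arrow of type $\sigma$ from $q$ to $p$ iff $\sigma(p)=q$. A path from $p$ to $q$ is a set $\{p_1,\dots,p_k\}$ of pairwise distinct cells with $p_1=p$, $p_k=q$ and $\tau_j(p_{j+1})=p_j$ for some $\tau_j\in\Sigma$. A cycle of length $k$ is such a path with additionally $\tau(p_1)=p_k$ for some $\tau\in\Sigma$; the network is feedforward if it has no cycles of length $\ge2$. For a finite-dimensional real vector space $V$ (internal phase space) and $f\colon V^n\times\mathbb R\to V$, the admissible vector fields are $\gamma_f(x,\lambda)_p=f(x_{\sigma_1(p)},\dots,x_{\sigma_n(p)},\lambda)$ on $V^N$; linear admissible maps are $\gamma_{\mathfrak l}$ with $\mathfrak l\colon V^n\to V$ linear. *)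

theory Defs
  imports "HOL-Analysis.Analysis"
begin

text \<open>A homogeneous network with asymmetric inputs: cells are the elements of the finite
type 'c; the input types are indexed by the finite type 's via Sg :: 's => 'c => 'c,
pairwise distinct (inj Sg), and a distinguished index s1 with Sg s1 = id.
An arrow of type Sg s from q to p exists iff Sg s p = q.\<close>

definition network :: "('s::finite \<Rightarrow> 'c::finite \<Rightarrow> 'c) \<Rightarrow> 's \<Rightarrow> bool" where
  "network Sg s1 \<longleftrightarrow> inj Sg \<and> Sg s1 = id"

definition is_cycle :: "('s \<Rightarrow> 'c \<Rightarrow> 'c) \<Rightarrow> 'c list \<Rightarrow> bool" where
  "is_cycle Sg ps \<longleftrightarrow> ps \<noteq> [] \<and> distinct ps
     \<and> (\<forall>j. Suc j < length ps \<longrightarrow> (\<exists>s. Sg s (ps ! Suc j) = ps ! j))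
     \<and> (\<exists>s. Sg s (ps ! 0) = last ps)"

definition feedforward :: "('s \<Rightarrow> 'c \<Rightarrow> 'c) \<Rightarrow> bool" where
  "feedforward Sg \<longleftrightarrow> \<not> (\<exists>ps. is_cycle Sg ps \<and> length ps \<ge> 2)"

definition admissible :: "('s::finite \<Rightarrow> 'c::finite \<Rightarrow> 'c) \<Rightarrow> ('v^'s \<Rightarrow> 'v) \<Rightarrow> 'v^'c \<Rightarrow> 'v^'c" where
  "admissible Sg f x = (\<chi> p. f (\<chi> s. x $ (Sg s p)))"

text \<open>mu is a (complex) eigenvalue of the real linear map T, i.e. an eigenvalue of its
complexification T_C(u + i v) = T u + i T v, with eigenvector u + i v \<noteq> 0:
T u + i T v = mu (u + i v).\<close>

definition cplx_eigenvalue :: "('a::real_vector \<Rightarrow> 'a) \<Rightarrow> complex \<Rightarrow> bool" where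
  "cplx_eigenvalue T mu \<longleftrightarrow> (\<exists>u v. (u \<noteq> 0 \<or> v \<noteq> 0)
      \<and> T u = Re mu *\<^sub>R u - Im mu *\<^sub>R v
      \<and> T v = Im mu *\<^sub>R u + Re mu *\<^sub>R v)"

end

theory Submission
  imports Defs "HOL-Library.Transitive_Closure_Table"
begin

definition deprel :: "('s \<Rightarrow> 'c \<Rightarrow> 'c) \<Rightarrow> ('c \<times> 'c) set" where
  "deprel Sg = {(q,p). q \<noteq> p \<and> (\<exists>s. Sg s p = q)}"

lemma deprel_acyclic:
  assumes "feedforward Sg"
  shows "acyclic (deprel Sg)"
  unfolding acyclic_def
proof (intro allI notI)
  fix x assume "(x,x) \<in> (deprel Sg)\<^sup>+"
  then obtain y where xy: "(x,y) \<in> deprel Sg" and yx: "(y,x) \<in> (deprel Sg)\<^sup>*"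
    by (metis trancl_unfold_left relcomp.cases)
  from yx have "(\<lambda>a b. (a,b) \<in> deprel Sg)\<^sup>*\<^sup>* y x"
    by (simp add: rtranclp_rtrancl_eq)
  then obtain xs where "rtrancl_path (\<lambda>a b. (a,b) \<in> deprel Sg) y xs x"
    using rtranclp_eq_rtrancl_path by metis
  then obtain xs' where p: "rtrancl_path (\<lambda>a b. (a,b) \<in> deprel Sg) y xs' x"
     and d: "distinct (y # xs')"
    using rtrancl_path_distinct by metis
  have xney: "x \<noteq> y" using xy by (simp add: deprel_def)
  have ne: "xs' \<noteq> []" using p xney by (auto elim: rtrancl_path.cases)
  have lst: "last (y # xs') = x" using rtrancl_path_last[OF p ne] ne by simp
  have "is_cycle Sg (y # xs')"
    unfolding is_cycle_def
  proof (intro conjI allI impI)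
    show "y # xs' \<noteq> []" by simp
    show "distinct (y # xs')" by fact
  next
    fix j assume "Suc j < length (y # xs')"
    then have "j < length xs'" by simp
    from rtrancl_path_nth[OF p this]
    have "((y # xs') ! j, (y # xs') ! Suc j) \<in> deprel Sg" by simp
    then show "\<exists>s. Sg s ((y # xs') ! Suc j) = (y # xs') ! j"
      by (simp add: deprel_def)
  next
    show "\<exists>s. Sg s ((y # xs') ! 0) = last (y # xs')"
      using xy lst by (simp add: deprel_def)
  qed
  moreover have "length (y # xs') \<ge> 2" using ne by (cases xs') auto
  ultimately show False using assms unfolding feedforward_def by blast
qed

lemma deprel_wf:
  fixes Sg :: "'s \<Rightarrow> 'c::finite \<Rightarrow> 'c"
  assumes "feedforward Sg"
  shows "wf (deprel Sg)"
  by (rule finite_acyclic_wf[OF _ deprel_acyclic[OF assms]]) simp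

lemma dim1_scalar:
  fixes g :: "'v::euclidean_space \<Rightarrow> 'v"
  assumes "DIM('v) = 1" "linear g"
  shows "\<exists>c. \<forall>x. g x = c *\<^sub>R x"
proof -
  obtain b where B: "Basis = {b :: 'v}" using assms(1) by (metis card_1_singletonE)
  have ex: "x = (x \<bullet> b) *\<^sub>R b" for x :: 'v
  proof -
    have "x = (\<Sum>b\<in>Basis. (x \<bullet> b) *\<^sub>R b)" by (simp only: euclidean_representation)
    also have "\<dots> = (x \<bullet> b) *\<^sub>R b" unfolding B by simp
    finally show ?thesis .
  qed
  show ?thesis
  proof (intro exI allI)
    fix x
    have "g x = (x \<bullet> b) *\<^sub>R g b"
      by (metis ex assms(2) linear_scale)
    also have "g b = (g b \<bullet> b) *\<^sub>R b" by (rule ex)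
    finally show "g x = (g b \<bullet> b) *\<^sub>R x"
      by (metis ex scaleR_scaleR mult.commute)
  qed
qed

lemma rot_arith:
  fixes U W :: "'a::real_vector" and a b :: real
  assumes "b \<noteq> 0" "a *\<^sub>R U = - (b *\<^sub>R W)" "a *\<^sub>R W = b *\<^sub>R U"
  shows "U = 0 \<and> W = 0"
proof -
  have "a *\<^sub>R (a *\<^sub>R U) = - (b *\<^sub>R (a *\<^sub>R W))" using assms(2)
    by (metis scaleR_minus_right scaleR_scaleR mult.commute)
  then have "(a*a + b*b) *\<^sub>R U = 0" using assms(3)
    by (simp add: algebra_simps)
  moreover have "a*a + b*b \<noteq> 0" using assms(1)
    by (metis add_nonneg_eq_0_iff mult_eq_0_iff zero_le_square)
  ultimately have U: "U = 0" by (metis scaleR_eq_0_iff)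
  then have "b *\<^sub>R W = 0" using assms(2) by simp
  then show ?thesis using U assms(1) by simp
qed

theorem theorem3p10:
  fixes Sg :: "'s::finite \<Rightarrow> 'c::finite \<Rightarrow> 'c" and s1 :: 's
  assumes "network Sg s1" and "feedforward Sg"
  shows "(DIM('v::euclidean_space) = 1 \<longrightarrow>
            (\<forall>l :: 'v^'s \<Rightarrow> 'v. \<forall>mu. linear l \<longrightarrow> cplx_eigenvalue (admissible Sg l) mu
               \<longrightarrow> Im mu = 0))
       \<and> (DIM('v) \<ge> 2 \<longrightarrow>
            (\<exists>l :: 'v^'s \<Rightarrow> 'v. \<exists>mu. linear l \<and> cplx_eigenvalue (admissible Sg l) mu
               \<and> Im mu \<noteq> 0))"
proof (intro conjI impI allI)
  fix l :: "'v^'s \<Rightarrow> 'v" and mu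
  assume d1: "DIM('v) = 1" and ll: "linear l" and ce: "cplx_eigenvalue (admissible Sg l) mu"
  show "Im mu = 0"
  proof (rule ccontr)
    assume im: "Im mu \<noteq> 0"
    from ce obtain u v :: "'v^'c" where nz: "u \<noteq> 0 \<or> v \<noteq> 0"
      and eu: "admissible Sg l u = Re mu *\<^sub>R u - Im mu *\<^sub>R v"
      and ev: "admissible Sg l v = Im mu *\<^sub>R u + Re mu *\<^sub>R v"
      unfolding cplx_eigenvalue_def by blast
    define S where "S = {p. u $ p \<noteq> 0 \<or> v $ p \<noteq> 0}"
    have "\<exists>p. u $ p \<noteq> 0 \<or> v $ p \<noteq> 0" using nz by (auto simp: vec_eq_iff)
    then obtain p0 where "p0 \<in> S" unfolding S_def by blast
    then obtain p where pS: "p \<in> S" and pmin: "\<And>q. (q,p) \<in> deprel Sg \<Longrightarrow> q \<notin> S"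
      using wfE_min[OF deprel_wf[OF assms(2)]] by blast
    define E where "E = (\<lambda>x::'v. (\<chi> s. if Sg s p = p then x else 0) :: 'v^'s)"
    have lE: "linear E" unfolding E_def
      by (auto simp: linear_iff vec_eq_iff)
    have red: "(\<chi> s. w $ Sg s p) = E (w $ p)" if "w = u \<or> w = v" for w :: "'v^'c"
    proof -
      have "w $ Sg s p = 0" if "Sg s p \<noteq> p" for s
        using pmin[of "Sg s p"] that \<open>w = u \<or> w = v\<close> by (auto simp: deprel_def S_def)
      then show ?thesis unfolding E_def by (auto simp: vec_eq_iff)
    qed
    obtain c where c: "\<And>x. (l \<circ> E) x = c *\<^sub>R x"
      using dim1_scalar[OF d1 linear_compose[OF lE ll]] by blast
    have "admissible Sg l u $ p = c *\<^sub>R u $ p"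
      using red[of u] c by (simp add: admissible_def)
    moreover have "admissible Sg l u $ p = Re mu *\<^sub>R u $ p - Im mu *\<^sub>R v $ p"
      using eu by simp
    ultimately have 1: "(c - Re mu) *\<^sub>R u $ p = - (Im mu *\<^sub>R v $ p)"
      by (simp add: algebra_simps)
    have "admissible Sg l v $ p = c *\<^sub>R v $ p"
      using red[of v] c by (simp add: admissible_def)
    moreover have "admissible Sg l v $ p = Im mu *\<^sub>R u $ p + Re mu *\<^sub>R v $ p"
      using ev by simp
    ultimately have 2: "(c - Re mu) *\<^sub>R v $ p = Im mu *\<^sub>R u $ p"
      by (simp add: algebra_simps)
    from rot_arith[OF im 1 2] pS show False by (simp add: S_def)
  qed
next
  assume d2: "DIM('v) \<ge> 2"
  obtain b1 b2 :: 'v where b: "b1 \<in> Basis" "b2 \<in> Basis" "b1 \<noteq> b2"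
  proof -
    have "\<not> (\<forall>x\<in>Basis. \<forall>y\<in>Basis. x = (y::'v))"
    proof
      assume "\<forall>x\<in>Basis. \<forall>y\<in>Basis. x = (y::'v)"
      then have "card (Basis::'v set) \<le> 1" using card_le_Suc0_iff_eq[OF finite_Basis[where 'a='v]] by (simp add: One_nat_def)
      with d2 show False by simp
    qed
    then show ?thesis using that by blast
  qed
  have i11: "b1 \<bullet> b1 = 1" "b2 \<bullet> b2 = 1" "b1 \<bullet> b2 = 0" "b2 \<bullet> b1 = 0"
    using b by (auto simp: inner_Basis)
  define l where "l = (\<lambda>x::'v^'s. (x $ s1 \<bullet> b1) *\<^sub>R b2 - (x $ s1 \<bullet> b2) *\<^sub>R b1)"
  have ll: "linear l" unfolding l_def
    by (auto simp: linear_iff inner_add_left algebra_simps)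
  have s1: "Sg s1 = id" using assms(1) by (simp add: network_def)
  have "cplx_eigenvalue (admissible Sg l) \<i>"
    unfolding cplx_eigenvalue_def
  proof (intro exI conjI)
    show "(\<chi> p. b1) \<noteq> (0::'v^'c) \<or> (\<chi> p. - b2) \<noteq> (0::'v^'c)"
      using b by (auto simp: vec_eq_iff nonzero_Basis)
    show "admissible Sg l (\<chi> p. b1) = Re \<i> *\<^sub>R (\<chi> p. b1) - Im \<i> *\<^sub>R (\<chi> p. - b2)"
      by (simp add: admissible_def l_def s1 i11 vec_eq_iff)
    show "admissible Sg l (\<chi> p. - b2) = Im \<i> *\<^sub>R (\<chi> p. b1) + Re \<i> *\<^sub>R (\<chi> p. - b2)"
      by (simp add: admissible_def l_def s1 i11 vec_eq_iff)
  qed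
  then show "\<exists>l :: 'v^'s \<Rightarrow> 'v. \<exists>mu. linear l \<and> cplx_eigenvalue (admissible Sg l) mu
               \<and> Im mu \<noteq> 0" using ll by force
qed

end
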